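(* Let $\Gamma$ be a cocompact lattice in $PSL(2,\mathbb{R})$. Then there is no nonempty compact subset $V\subset\mathrm{Har}(\mathbb{D})^*$ with $\varphi\circ\gamma^{-1}\in V$ for all $\varphi\in V$ and $\gamma\in\Gamma$.
   Context: $\mathrm{Har}(\mathbb{D})$ is the set of complex-valued harmonic functions $\varphi$ on the open unit disc $\mathbb{D}$ with $\varphi(\mathbb{D})\subset\overline{\mathbb{D}}$, with the topology of uniform convergence on compact subsets; $\mathrm{Har}(\mathbb{D})^*$ is its subset of nonconstant functions. $PSL(2,\mathbb{R})\cong PSU(1,1)$ acts on $\mathbb{D}$ by $z\mapsto(\alpha z+\beta)/(\bar\beta z+\bar\alpha)$, $|\alpha|^2-|\beta|^2=1$. *)

theory Defs
  imports "HOL-Analysis.Analysis"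
begin

text \<open>An element of SU(1,1) is the matrix [[a, b], [cnj b, cnj a]] with |a|^2 - |b|^2 = 1,
  represented by the pair (a, b).  PSU(1,1) = SU(1,1) / {+1,-1}; a subgroup of PSU(1,1)
  is represented by its full preimage in SU(1,1), i.e. a subgroup containing -1.\<close>

definition SU11 :: "(complex \<times> complex) set" where
  "SU11 = {(a, b). (cmod a)^2 - (cmod b)^2 = 1}"

definition su_mult :: "complex \<times> complex \<Rightarrow> complex \<times> complex \<Rightarrow> complex \<times> complex" where
  "su_mult g h = (case g of (a1, b1) \<Rightarrow> case h of (a2, b2) \<Rightarrow>
      (a1 * a2 + b1 * cnj b2, a1 * b2 + b1 * cnj a2))"

definition su_inv :: "complex \<times> complex \<Rightarrow> complex \<times> complex" where
  "su_inv g = (case g of (a, b) \<Rightarrow> (cnj a, - b))"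

definition mob :: "complex \<times> complex \<Rightarrow> complex \<Rightarrow> complex" where
  "mob g z = (case g of (a, b) \<Rightarrow> (a * z + b) / (cnj b * z + cnj a))"

text \<open>A cocompact lattice in PSU(1,1) (= PSL(2,R)), given by its preimage in SU(1,1):
  a discrete subgroup with compact quotient (equivalently, SU(1,1) = K \<Gamma> for a compact K).\<close>
definition cocompact_lattice :: "(complex \<times> complex) set \<Rightarrow> bool" where
  "cocompact_lattice \<Gamma> \<longleftrightarrow>
     \<Gamma> \<subseteq> SU11 \<and> (1, 0) \<in> \<Gamma> \<and> (-1, 0) \<in> \<Gamma> \<and>
     (\<forall>g\<in>\<Gamma>. \<forall>h\<in>\<Gamma>. su_mult g h \<in> \<Gamma>) \<and> (\<forall>g\<in>\<Gamma>. su_inv g \<in> \<Gamma>) \<and>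
     (\<forall>g\<in>\<Gamma>. \<exists>e>0. \<forall>h\<in>\<Gamma>. dist h g < e \<longrightarrow> h = g) \<and>
     (\<exists>K. compact K \<and> K \<subseteq> SU11 \<and> (\<forall>g\<in>SU11. \<exists>k\<in>K. \<exists>\<gamma>\<in>\<Gamma>. g = su_mult k \<gamma>))"

definition dx :: "(complex \<Rightarrow> complex) \<Rightarrow> complex \<Rightarrow> complex" where
  "dx f z = vector_derivative (\<lambda>t::real. f (z + of_real t)) (at 0)"

definition dy :: "(complex \<Rightarrow> complex) \<Rightarrow> complex \<Rightarrow> complex" where
  "dy f z = vector_derivative (\<lambda>t::real. f (z + \<i> * of_real t)) (at 0)"

definition has_partials :: "(complex \<Rightarrow> complex) \<Rightarrow> complex \<Rightarrow> bool" where
  "has_partials f z \<longleftrightarrow>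
     (\<lambda>t::real. f (z + of_real t)) differentiable (at 0) \<and>
     (\<lambda>t::real. f (z + \<i> * of_real t)) differentiable (at 0)"

definition harmonic_on :: "(complex \<Rightarrow> complex) \<Rightarrow> complex set \<Rightarrow> bool" where
  "harmonic_on f S \<longleftrightarrow>
     (\<forall>z\<in>S. has_partials f z \<and> has_partials (dx f) z \<and> has_partials (dy f) z) \<and>
     continuous_on S (dx (dx f)) \<and> continuous_on S (dy (dx f)) \<and>
     continuous_on S (dx (dy f)) \<and> continuous_on S (dy (dy f)) \<and>
     (\<forall>z\<in>S. dx (dx f) z + dy (dy f) z = 0)"

definition Har :: "(complex \<Rightarrow> complex) set" where
  "Har = {\<phi>. harmonic_on \<phi> (ball 0 1) \<and> \<phi> ` ball 0 1 \<subseteq> cball 0 1}"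

definition Har_star :: "(complex \<Rightarrow> complex) set" where
  "Har_star = {\<phi>\<in>Har. \<not> (\<exists>c. \<forall>z\<in>ball 0 1. \<phi> z = c)}"

definition lu_topology :: "(complex \<Rightarrow> complex) topology" where
  "lu_topology = topology (\<lambda>U. \<forall>\<phi>\<in>U. \<exists>K e. compact K \<and> K \<subseteq> ball 0 1 \<and> e > 0 \<and>
       {\<psi>. \<forall>z\<in>K. cmod (\<psi> z - \<phi> z) < e} \<subseteq> U)"

end

theory Submission
  imports Defs "HOL-Complex_Analysis.Complex_Analysis"
begin


lemma line_vd_shift:
  fixes f :: "complex \<Rightarrow> complex"
  assumes "((\<lambda>t::real. f (z + d * of_real t)) has_vector_derivative v) (at 0)"
    and "z = w + d * of_real t0"
  shows "((\<lambda>t::real. f (w + d * of_real t)) has_vector_derivative v) (at t0)"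
proof -
  have e: "(\<lambda>t::real. f (w + d * of_real t)) = (\<lambda>t. f (z + d * of_real t)) \<circ> (\<lambda>t. t - t0)"
    using assms(2) by (auto simp: algebra_simps)
  have "((\<lambda>t::real. t - t0) has_derivative (\<lambda>x. x)) (at t0)"
    by (auto intro!: derivative_eq_intros)
  moreover have "((\<lambda>t::real. f (z + d * of_real t)) has_derivative (\<lambda>x. x *\<^sub>R v)) (at (t0 - t0))"
    using assms(1) by (simp add: has_vector_derivative_def)
  ultimately have "(((\<lambda>t. f (z + d * of_real t)) \<circ> (\<lambda>t. t - t0)) has_derivative ((\<lambda>x. x *\<^sub>R v) \<circ> (\<lambda>x. x))) (at t0)"
    by (rule diff_chain_at)
  then show ?thesis unfolding e by (simp add: has_vector_derivative_def o_def)
qed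

lemma dx_vd: "has_partials f z \<Longrightarrow> ((\<lambda>t::real. f (z + 1 * of_real t)) has_vector_derivative dx f z) (at 0)"
  unfolding has_partials_def dx_def by (simp add: vector_derivative_works[symmetric])

lemma dy_vd: "has_partials f z \<Longrightarrow> ((\<lambda>t::real. f (z + \<i> * of_real t)) has_vector_derivative dy f z) (at 0)"
  unfolding has_partials_def dy_def by (simp add: vector_derivative_works[symmetric])

lemma path_bound:
  fixes p :: "real \<Rightarrow> complex"
  assumes d: "\<And>t. t \<in> closed_segment a b \<Longrightarrow> (p has_vector_derivative p' t) (at t)"
    and B: "\<And>t. t \<in> closed_segment a b \<Longrightarrow> cmod (p' t - c) \<le> B"
  shows "cmod (p b - p a - (b - a) *\<^sub>R c) \<le> B * \<bar>b - a\<bar>"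
proof -
  have B0: "0 \<le> B" using B[of a] by (meson ends_in_segment(1) norm_ge_zero order_trans)
  have "norm ((\<lambda>t. p t - t *\<^sub>R c) b - (\<lambda>t. p t - t *\<^sub>R c) a) \<le> B * norm (b - a)"
  proof (rule differentiable_bound[where S="closed_segment a b" and f'="\<lambda>t h. h *\<^sub>R (p' t - c)"])
    show "convex (closed_segment a b)" by simp
    fix x assume x: "x \<in> closed_segment a b"
    have "(p has_derivative (\<lambda>h. h *\<^sub>R p' x)) (at x within closed_segment a b)"
      using d[OF x] by (simp add: has_vector_derivative_def has_derivative_at_withinI)
    then show "((\<lambda>t. p t - t *\<^sub>R c) has_derivative (\<lambda>h. h *\<^sub>R (p' x - c))) (at x within closed_segment a b)"
      by (auto intro!: derivative_eq_intros simp: algebra_simps)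
    show "onorm (\<lambda>h. h *\<^sub>R (p' x - c)) \<le> B"
      by (rule onorm_bound) (use B0 B[OF x] in \<open>auto simp: mult.commute[of B] intro: mult_left_mono\<close>)
  qed auto
  then show ?thesis by (simp add: algebra_simps)
qed

lemma seg_abs: "(t::real) \<in> closed_segment 0 a \<Longrightarrow> \<bar>t\<bar> \<le> \<bar>a\<bar>"
  by (auto simp: closed_segment_eq_real_ivl split: if_splits)

lemma bl_partial: "bounded_linear (\<lambda>h. Re h *\<^sub>R A + Im h *\<^sub>R (B::complex))"
  by (intro bounded_linear_add bounded_linear_compose[OF bounded_linear_scaleR_left] bounded_linear_Re bounded_linear_Im)

lemma partials_deriv:
  fixes f :: "complex \<Rightarrow> complex"
  assumes S: "open S" and hp: "\<And>w. w \<in> S \<Longrightarrow> has_partials f w"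
    and cx: "continuous_on S (dx f)" and cy: "continuous_on S (dy f)" and z: "z \<in> S"
  shows "(f has_derivative (\<lambda>h. Re h *\<^sub>R dx f z + Im h *\<^sub>R dy f z)) (at z)"
  unfolding has_derivative_at_alt
proof (intro conjI allI impI bl_partial)
  fix e :: real assume e: "e > 0"
  obtain d0 where d0: "d0 > 0" "ball z d0 \<subseteq> S" using S z open_contains_ball by blast
  obtain d1 where d1: "d1 > 0" "\<And>w. w \<in> S \<Longrightarrow> dist w z < d1 \<Longrightarrow> dist (dx f w) (dx f z) < e/2"
    using cx z e unfolding continuous_on_iff by (meson half_gt_zero)
  obtain d2 where d2: "d2 > 0" "\<And>w. w \<in> S \<Longrightarrow> dist w z < d2 \<Longrightarrow> dist (dy f w) (dy f z) < e/2"
    using cy z e unfolding continuous_on_iff by (meson half_gt_zero)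
  define d where "d = min d0 (min d1 d2)"
  have d: "d > 0" using d0 d1 d2 by (simp add: d_def)
  show "\<exists>d>0. \<forall>y. cmod (y - z) < d \<longrightarrow>
      cmod (f y - f z - (Re (y - z) *\<^sub>R dx f z + Im (y - z) *\<^sub>R dy f z)) \<le> e * cmod (y - z)"
  proof (intro exI[of _ d] conjI allI impI d)
    fix y assume y: "cmod (y - z) < d"
    define h where "h = y - z"
    define a where "a = Re h"
    define b where "b = Im h"
    have ah: "\<bar>a\<bar> \<le> cmod h" and bh: "\<bar>b\<bar> \<le> cmod h"
      by (simp_all add: a_def b_def abs_Re_le_cmod abs_Im_le_cmod)
    have inS: "w \<in> S" "dist w z < d1" "dist w z < d2" if "cmod (w - z) \<le> cmod h" for w
      using that y d0 unfolding h_def d_def by (force simp: dist_norm dist_commute norm_minus_commute)+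
    have p1: "cmod (f (z + of_real a) - f (z + of_real 0) - (a - 0) *\<^sub>R dx f z) \<le> e/2 * \<bar>a - 0\<bar>"
    proof (rule path_bound[where p'="\<lambda>t. dx f (z + of_real t)"])
      fix t assume t: "t \<in> closed_segment 0 a"
      then have tw: "cmod ((z + of_real t) - z) \<le> cmod h" using seg_abs[OF t] ah by simp
      show "((\<lambda>t. f (z + complex_of_real t)) has_vector_derivative dx f (z + complex_of_real t)) (at t)"
        using line_vd_shift[OF dx_vd[OF hp[OF inS(1)[OF tw]]], of z t] by simp
      show "cmod (dx f (z + complex_of_real t) - dx f z) \<le> e / 2"
        using d1(2)[OF inS(1,2)[OF tw]] by (simp add: dist_norm)
    qed
    have p2: "cmod (f (z + of_real a + \<i> * of_real b) - f (z + of_real a + \<i> * of_real 0) - (b - 0) *\<^sub>R dy f z) \<le> e/2 * \<bar>b - 0\<bar>"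
    proof (rule path_bound[where p'="\<lambda>t. dy f (z + of_real a + \<i> * of_real t)"])
      fix t assume t: "t \<in> closed_segment 0 b"
      have "cmod (of_real a + \<i> * of_real t) \<le> cmod h"
      proof -
        have "cmod (of_real a + \<i> * of_real t) = sqrt (a^2 + t^2)" by (simp add: cmod_def)
        also have "\<dots> \<le> sqrt (a^2 + b^2)" using seg_abs[OF t]
          by (intro real_sqrt_le_mono add_left_mono) (metis abs_le_square_iff)
        also have "\<dots> = cmod h" by (simp add: cmod_def a_def b_def)
        finally show ?thesis .
      qed
      then have tw: "cmod ((z + of_real a + \<i> * of_real t) - z) \<le> cmod h" by (simp add: algebra_simps)
      show "((\<lambda>t. f (z + of_real a + \<i> * of_real t)) has_vector_derivative dy f (z + of_real a + \<i> * of_real t)) (at t)"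
        by (rule line_vd_shift[OF dy_vd[OF hp[OF inS(1)[OF tw]]]]) simp
      show "cmod (dy f (z + of_real a + \<i> * of_real t) - dy f z) \<le> e / 2"
        using d2(2)[OF inS(1,3)[OF tw]] by (simp add: dist_norm)
    qed
    have yz: "y = z + of_real a + \<i> * of_real b" unfolding a_def b_def h_def
      by (simp add: complex_eq_iff)
    have "f y - f z - (Re (y - z) *\<^sub>R dx f z + Im (y - z) *\<^sub>R dy f z)
        = (f (z + of_real a + \<i> * of_real b) - f (z + of_real a + \<i> * of_real 0) - (b - 0) *\<^sub>R dy f z)
          + (f (z + of_real a) - f (z + of_real 0) - (a - 0) *\<^sub>R dx f z)"
      using yz by (simp add: a_def b_def h_def)
    also have "cmod \<dots> \<le> e/2 * \<bar>b - 0\<bar> + e/2 * \<bar>a - 0\<bar>"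
      by (rule order_trans[OF norm_triangle_ineq add_mono[OF p2 p1]])
    also have "\<dots> \<le> e/2 * cmod h + e/2 * cmod h"
      using ah bh e by (intro add_mono mult_left_mono) auto
    finally show "cmod (f y - f z - (Re (y - z) *\<^sub>R dx f z + Im (y - z) *\<^sub>R dy f z)) \<le> e * cmod (y - z)"
      by (simp add: h_def)
  qed
qed

lemma vd_x:
  assumes "has_partials f (w + of_real s)"
  shows "((\<lambda>t::real. f (w + of_real t)) has_vector_derivative dx f (w + of_real s)) (at s)"
  using line_vd_shift[OF dx_vd[OF assms], of w s] by simp

lemma vd_y:
  assumes "has_partials f (w + \<i> * of_real s)"
  shows "((\<lambda>t::real. f (w + \<i> * of_real t)) has_vector_derivative dy f (w + \<i> * of_real s)) (at s)"
  using line_vd_shift[OF dy_vd[OF assms], of w s] by simp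

lemma deriv_rem:
  assumes "(g has_derivative (\<lambda>h. Re h *\<^sub>R a + Im h *\<^sub>R b)) (at z)" "e > 0"
  obtains d where "d > 0" "\<And>v. cmod v < d \<Longrightarrow> cmod (g (z + v) - g z - (Re v *\<^sub>R a + Im v *\<^sub>R b)) \<le> e * cmod v"
proof -
  obtain d where "d > 0" and d: "\<And>y. cmod (y - z) < d \<Longrightarrow> cmod (g y - g z - (Re (y - z) *\<^sub>R a + Im (y - z) *\<^sub>R b)) \<le> e * cmod (y - z)"
    using assms unfolding has_derivative_at_alt by meson
  show ?thesis
    by (rule that[OF \<open>d > 0\<close>]) (use d[of "z + _"] in auto)
qed

lemma schwarz:
  fixes f :: "complex \<Rightarrow> complex"
  assumes S: "open S" and z: "z \<in> S" and hp: "\<And>w. w \<in> S \<Longrightarrow> has_partials f w"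
    and DX: "(dx f has_derivative (\<lambda>h. Re h *\<^sub>R a1 + Im h *\<^sub>R a2)) (at z)"
    and DY: "(dy f has_derivative (\<lambda>h. Re h *\<^sub>R b1 + Im h *\<^sub>R b2)) (at z)"
  shows "a2 = b1"
proof (rule ccontr)
  assume ne: "a2 \<noteq> b1"
  define e where "e = cmod (a2 - b1) / 12"
  have e: "e > 0" using ne by (simp add: e_def)
  obtain d0 where d0: "d0 > 0" "ball z d0 \<subseteq> S" using S z open_contains_ball by blast
  obtain d1 where d1: "d1 > 0" "\<And>v. cmod v < d1 \<Longrightarrow> cmod (dx f (z + v) - dx f z - (Re v *\<^sub>R a1 + Im v *\<^sub>R a2)) \<le> e * cmod v"
    using deriv_rem[OF DX e] by blast
  obtain d2 where d2: "d2 > 0" "\<And>v. cmod v < d2 \<Longrightarrow> cmod (dy f (z + v) - dy f z - (Re v *\<^sub>R b1 + Im v *\<^sub>R b2)) \<le> e * cmod v"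
    using deriv_rem[OF DY e] by blast
  define t where "t = min d0 (min d1 d2) / 3"
  have t: "t > 0" "3 * t \<le> d0" "3 * t \<le> d1" "3 * t \<le> d2" using d0 d1 d2 by (auto simp: t_def)
  have small: "cmod (of_real s + \<i> * of_real r) \<le> 2 * t" if "\<bar>s\<bar> \<le> t" "\<bar>r\<bar> \<le> t" for s r
  proof -
    have "cmod (of_real s + \<i> * of_real r) \<le> cmod (of_real s) + cmod (\<i> * of_real r)" by (rule norm_triangle_ineq)
    also have "\<dots> \<le> 2 * t" using that by (simp add: norm_mult)
    finally show ?thesis .
  qed
  have inS: "z + (of_real s + \<i> * of_real r) \<in> S" if "\<bar>s\<bar> \<le> t" "\<bar>r\<bar> \<le> t" for s r
  proof -
    have "dist z (z + (of_real s + \<i> * of_real r)) = cmod (of_real s + \<i> * of_real r)"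
      by (metis add_diff_cancel_left' dist_commute dist_norm)
    then have "dist z (z + (of_real s + \<i> * of_real r)) < d0" using small[OF that] t by linarith
    then show ?thesis using d0(2) by auto
  qed
  have segt: "\<bar>s\<bar> \<le> t" if "s \<in> closed_segment 0 t" for s using seg_abs[OF that] t by simp
  define p where "p s = f (z + \<i> * of_real t + of_real s) - f (z + of_real s)" for s :: real
  define q where "q s = f (z + of_real t + \<i> * of_real s) - f (z + \<i> * of_real s)" for s :: real
  have P: "cmod (p t - p 0 - (t - 0) *\<^sub>R (of_real t * a2)) \<le> (3 * e * t) * \<bar>t - 0\<bar>"
  proof (rule path_bound[where p'="\<lambda>s. dx f (z + \<i> * of_real t + of_real s) - dx f (z + of_real s)"])
    fix s assume s: "s \<in> closed_segment 0 t"
    have s': "\<bar>s\<bar> \<le> t" using segt[OF s] .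
    have h1: "has_partials f (z + \<i> * of_real t + of_real s)"
      using hp[OF inS[OF s', of t]] t by (simp add: algebra_simps)
    have h2: "has_partials f (z + of_real s)"
      using hp[OF inS[OF s', of 0]] t by (simp add: algebra_simps)
    show "(p has_vector_derivative dx f (z + \<i> * of_real t + of_real s) - dx f (z + of_real s)) (at s)"
      unfolding p_def by (intro has_vector_derivative_diff vd_x h1 h2)
    have r1: "cmod (dx f (z + (of_real s + \<i> * of_real t)) - dx f z - (s *\<^sub>R a1 + t *\<^sub>R a2)) \<le> e * (2 * t)"
    proof -
      have sm: "cmod (of_real s + \<i> * of_real t) \<le> 2 * t" using small[OF s', of t] t by simp
      then have "cmod (of_real s + \<i> * of_real t) < d1" using t by linarith
      from d1(2)[OF this] have "cmod (dx f (z + (of_real s + \<i> * of_real t)) - dx f z - (s *\<^sub>R a1 + t *\<^sub>R a2)) \<le> e * cmod (of_real s + \<i> * of_real t)" by simp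
      also have "\<dots> \<le> e * (2 * t)" using sm e by (intro mult_left_mono) auto
      finally show ?thesis .
    qed
    have r2: "cmod (dx f (z + (of_real s)) - dx f z - (s *\<^sub>R a1)) \<le> e * t"
    proof -
      have "cmod (of_real s) < d1" using s' t by simp
      from d1(2)[OF this] have "cmod (dx f (z + (of_real s)) - dx f z - (s *\<^sub>R a1)) \<le> e * cmod (of_real s)" by simp
      also have "\<dots> \<le> e * t" using s' e by (intro mult_left_mono) auto
      finally show ?thesis .
    qed
    have "dx f (z + \<i> * of_real t + of_real s) - dx f (z + of_real s) - of_real t * a2
        = (dx f (z + (of_real s + \<i> * of_real t)) - dx f z - (s *\<^sub>R a1 + t *\<^sub>R a2))
          - (dx f (z + (of_real s)) - dx f z - (s *\<^sub>R a1))"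
      by (simp add: algebra_simps scaleR_conv_of_real)
    also have "cmod \<dots> \<le> e * (2 * t) + e * t"
      by (rule order_trans[OF norm_triangle_ineq4 add_mono[OF r1 r2]])
    finally show "cmod (dx f (z + \<i> * of_real t + of_real s) - dx f (z + of_real s) - of_real t * a2) \<le> 3 * e * t"
      by simp
  qed
  have Q: "cmod (q t - q 0 - (t - 0) *\<^sub>R (of_real t * b1)) \<le> (3 * e * t) * \<bar>t - 0\<bar>"
  proof (rule path_bound[where p'="\<lambda>s. dy f (z + of_real t + \<i> * of_real s) - dy f (z + \<i> * of_real s)"])
    fix s assume s: "s \<in> closed_segment 0 t"
    have s': "\<bar>s\<bar> \<le> t" using segt[OF s] .
    have h1: "has_partials f (z + of_real t + \<i> * of_real s)"
      using hp[OF inS[of t s]] s' t by (simp add: algebra_simps)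
    have h2: "has_partials f (z + \<i> * of_real s)"
      using hp[OF inS[of 0 s]] s' t by (simp add: algebra_simps)
    show "(q has_vector_derivative dy f (z + of_real t + \<i> * of_real s) - dy f (z + \<i> * of_real s)) (at s)"
      unfolding q_def by (intro has_vector_derivative_diff vd_y h1 h2)
    have r1: "cmod (dy f (z + (of_real t + \<i> * of_real s)) - dy f z - (t *\<^sub>R b1 + s *\<^sub>R b2)) \<le> e * (2 * t)"
    proof -
      have sm: "cmod (of_real t + \<i> * of_real s) \<le> 2 * t" using small[OF _ s', of t] t by simp
      then have "cmod (of_real t + \<i> * of_real s) < d2" using t by linarith
      from d2(2)[OF this] have "cmod (dy f (z + (of_real t + \<i> * of_real s)) - dy f z - (t *\<^sub>R b1 + s *\<^sub>R b2)) \<le> e * cmod (of_real t + \<i> * of_real s)" by simp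
      also have "\<dots> \<le> e * (2 * t)" using sm e by (intro mult_left_mono) auto
      finally show ?thesis .
    qed
    have r2: "cmod (dy f (z + (\<i> * of_real s)) - dy f z - (s *\<^sub>R b2)) \<le> e * t"
    proof -
      have "cmod (\<i> * of_real s) < d2" using s' t by (simp add: norm_mult)
      from d2(2)[OF this] have "cmod (dy f (z + (\<i> * of_real s)) - dy f z - (s *\<^sub>R b2)) \<le> e * cmod (\<i> * of_real s)" by simp
      also have "\<dots> \<le> e * t" using s' e by (intro mult_left_mono) (auto simp: norm_mult)
      finally show ?thesis .
    qed
    have "dy f (z + of_real t + \<i> * of_real s) - dy f (z + \<i> * of_real s) - of_real t * b1
        = (dy f (z + (of_real t + \<i> * of_real s)) - dy f z - (t *\<^sub>R b1 + s *\<^sub>R b2))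
          - (dy f (z + (\<i> * of_real s)) - dy f z - (s *\<^sub>R b2))"
      by (simp add: algebra_simps scaleR_conv_of_real)
    also have "cmod \<dots> \<le> e * (2 * t) + e * t"
      by (rule order_trans[OF norm_triangle_ineq4 add_mono[OF r1 r2]])
    finally show "cmod (dy f (z + of_real t + \<i> * of_real s) - dy f (z + \<i> * of_real s) - of_real t * b1) \<le> 3 * e * t"
      by simp
  qed
  have pq: "p t = q t - q 0 + p 0" unfolding p_def q_def by (simp add: algebra_simps)
  have "cmod ((of_real t * of_real t) * (b1 - a2)) = cmod ((p t - p 0 - (t - 0) *\<^sub>R (of_real t * a2)) - (q t - q 0 - (t - 0) *\<^sub>R (of_real t * b1)))"
    unfolding pq by (simp add: algebra_simps scaleR_conv_of_real)
  also have "\<dots> \<le> (3 * e * t) * \<bar>t - 0\<bar> + (3 * e * t) * \<bar>t - 0\<bar>"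
    by (rule order_trans[OF norm_triangle_ineq4 add_mono[OF P Q]])
  finally have X: "cmod ((of_real t * of_real t) * (b1 - a2)) \<le> (3 * e * t) * \<bar>t - 0\<bar> + (3 * e * t) * \<bar>t - 0\<bar>" .
  have "cmod ((of_real t * of_real t) * (b1 - a2)) = t * t * cmod (b1 - a2)"
    using t by (simp add: norm_mult)
  with X have "t * t * cmod (b1 - a2) \<le> t * t * (6 * e)" using t by (simp add: algebra_simps)
  then have "cmod (b1 - a2) \<le> 6 * e" using t by (simp add: mult_le_cancel_left_pos)
  then show False using e unfolding e_def by (simp add: norm_minus_commute)
qed

context
  fixes f :: "complex \<Rightarrow> complex" and S :: "complex set"
  assumes H: "harmonic_on f S" and S: "open S"
begin

lemma harm_hp: "w \<in> S \<Longrightarrow> has_partials f w" "w \<in> S \<Longrightarrow> has_partials (dx f) w" "w \<in> S \<Longrightarrow> has_partials (dy f) w"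
  using H unfolding harmonic_on_def by auto

lemma harm_dx_deriv: "z \<in> S \<Longrightarrow> (dx f has_derivative (\<lambda>h. Re h *\<^sub>R dx (dx f) z + Im h *\<^sub>R dy (dx f) z)) (at z)"
  by (rule partials_deriv[OF S harm_hp(2)]) (use H in \<open>auto simp: harmonic_on_def\<close>)

lemma harm_dy_deriv: "z \<in> S \<Longrightarrow> (dy f has_derivative (\<lambda>h. Re h *\<^sub>R dx (dy f) z + Im h *\<^sub>R dy (dy f) z)) (at z)"
  by (rule partials_deriv[OF S harm_hp(3)]) (use H in \<open>auto simp: harmonic_on_def\<close>)

lemma harm_cont_dx: "continuous_on S (dx f)"
  using harm_dx_deriv by (intro continuous_at_imp_continuous_on ballI) (meson has_derivative_continuous)

lemma harm_cont_dy: "continuous_on S (dy f)"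
  using harm_dy_deriv by (intro continuous_at_imp_continuous_on ballI) (meson has_derivative_continuous)

lemma harm_deriv: "z \<in> S \<Longrightarrow> (f has_derivative (\<lambda>h. Re h *\<^sub>R dx f z + Im h *\<^sub>R dy f z)) (at z)"
  by (rule partials_deriv[OF S harm_hp(1) harm_cont_dx harm_cont_dy])

lemma harm_cont: "continuous_on S f"
  using harm_deriv by (intro continuous_at_imp_continuous_on ballI) (meson has_derivative_continuous)

lemma harm_sym: "z \<in> S \<Longrightarrow> dy (dx f) z = dx (dy f) z"
  by (rule schwarz[OF S _ harm_hp(1) harm_dx_deriv harm_dy_deriv])

lemma harm_lap: "z \<in> S \<Longrightarrow> dy (dy f) z = - dx (dx f) z"
  using H unfolding harmonic_on_def by (simp add: eq_neg_iff_add_eq_0 add.commute)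

lemma harm_holo1: "z \<in> S \<Longrightarrow> ((\<lambda>w. dx f w - \<i> * dy f w) has_field_derivative (dx (dx f) z - \<i> * dx (dy f) z)) (at z)"
  unfolding has_field_derivative_def
proof (rule has_derivative_eq_rhs)
  assume z: "z \<in> S"
  show "((\<lambda>w. dx f w - \<i> * dy f w) has_derivative
      (\<lambda>h. (Re h *\<^sub>R dx (dx f) z + Im h *\<^sub>R dy (dx f) z) - \<i> * (Re h *\<^sub>R dx (dy f) z + Im h *\<^sub>R dy (dy f) z))) (at z)"
    by (intro has_derivative_diff has_derivative_mult_right harm_dx_deriv harm_dy_deriv z)
  show "(\<lambda>h. (Re h *\<^sub>R dx (dx f) z + Im h *\<^sub>R dy (dx f) z) - \<i> * (Re h *\<^sub>R dx (dy f) z + Im h *\<^sub>R dy (dy f) z))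
      = (*) (dx (dx f) z - \<i> * dx (dy f) z)"
  proof
    fix h
    have h: "h = of_real (Re h) + \<i> * of_real (Im h)" by (simp add: complex_eq_iff)
    show "(Re h *\<^sub>R dx (dx f) z + Im h *\<^sub>R dy (dx f) z) - \<i> * (Re h *\<^sub>R dx (dy f) z + Im h *\<^sub>R dy (dy f) z)
      = (dx (dx f) z - \<i> * dx (dy f) z) * h"
      apply (subst (5) h)
      by (simp add: harm_sym[OF z] harm_lap[OF z] scaleR_conv_of_real algebra_simps)
  qed
qed

lemma harm_holo2: "z \<in> S \<Longrightarrow> ((\<lambda>w. cnj (dx f w + \<i> * dy f w)) has_field_derivative cnj (dx (dx f) z + \<i> * dx (dy f) z)) (at z)"
  unfolding has_field_derivative_def
proof (rule has_derivative_eq_rhs)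
  assume z: "z \<in> S"
  show "((\<lambda>w. cnj (dx f w + \<i> * dy f w)) has_derivative
      (\<lambda>h. cnj ((Re h *\<^sub>R dx (dx f) z + Im h *\<^sub>R dy (dx f) z) + \<i> * (Re h *\<^sub>R dx (dy f) z + Im h *\<^sub>R dy (dy f) z)))) (at z)"
    by (intro bounded_linear.has_derivative[OF bounded_linear_cnj] has_derivative_add has_derivative_mult_right harm_dx_deriv harm_dy_deriv z)
  show "(\<lambda>h. cnj ((Re h *\<^sub>R dx (dx f) z + Im h *\<^sub>R dy (dx f) z) + \<i> * (Re h *\<^sub>R dx (dy f) z + Im h *\<^sub>R dy (dy f) z)))
      = (*) (cnj (dx (dx f) z + \<i> * dx (dy f) z))"
  proof
    fix h
    have h: "h = of_real (Re h) + \<i> * of_real (Im h)" by (simp add: complex_eq_iff)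
    show "cnj ((Re h *\<^sub>R dx (dx f) z + Im h *\<^sub>R dy (dx f) z) + \<i> * (Re h *\<^sub>R dx (dy f) z + Im h *\<^sub>R dy (dy f) z))
      = (cnj (dx (dx f) z + \<i> * dx (dy f) z)) * h"
      apply (subst (5) h)
      by (simp add: harm_sym[OF z] harm_lap[OF z] scaleR_conv_of_real algebra_simps)
  qed
qed

lemma harm_decomp:
  assumes C: "convex S"
  obtains H1 H2 c where "H1 holomorphic_on S" "H2 holomorphic_on S"
    "\<And>z. z \<in> S \<Longrightarrow> f z = (H1 z + cnj (H2 z)) / 2 + c"
proof -
  define g1 where "g1 w = dx f w - \<i> * dy f w" for w
  define g2 where "g2 w = cnj (dx f w + \<i> * dy f w)" for w
  have hol1: "g1 holomorphic_on S" unfolding g1_def holomorphic_on_def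
    using harm_holo1 by (meson field_differentiable_at_within field_differentiable_def)
  have hol2: "g2 holomorphic_on S" unfolding g2_def holomorphic_on_def
    using harm_holo2 by (meson field_differentiable_at_within field_differentiable_def)
  obtain H1 where H1: "\<And>x. x \<in> S \<Longrightarrow> (H1 has_field_derivative g1 x) (at x within S)"
    using holomorphic_convex_primitive'[OF C S hol1] by blast
  obtain H2 where H2: "\<And>x. x \<in> S \<Longrightarrow> (H2 has_field_derivative g2 x) (at x within S)"
    using holomorphic_convex_primitive'[OF C S hol2] by blast
  have H1a: "(H1 has_field_derivative g1 x) (at x)" if "x \<in> S" for x
    using H1[OF that] at_within_open[OF that S] by simp
  have H2a: "(H2 has_field_derivative g2 x) (at x)" if "x \<in> S" for x
    using H2[OF that] at_within_open[OF that S] by simp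
  have "\<exists>c. \<forall>z\<in>S. (\<lambda>z. f z - (H1 z + cnj (H2 z)) / 2) z = c"
  proof (rule has_derivative_zero_constant[OF C])
    fix z assume z: "z \<in> S"
    have "((\<lambda>z. f z - (H1 z + cnj (H2 z)) / 2) has_derivative
        (\<lambda>h. (Re h *\<^sub>R dx f z + Im h *\<^sub>R dy f z) - ((g1 z * h) + cnj (g2 z * h)) / 2)) (at z)"
    proof -
      have "((\<lambda>x. H1 x + cnj (H2 x)) has_derivative (\<lambda>h. g1 z * h + cnj (g2 z * h))) (at z)"
        using H1a[OF z] H2a[OF z] unfolding has_field_derivative_def
        by (intro has_derivative_add bounded_linear.has_derivative[OF bounded_linear_cnj])
      from bounded_linear.has_derivative[OF bounded_linear_divide[of 2] this]
      show ?thesis by (intro has_derivative_diff harm_deriv z)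
    qed
    moreover have "(\<lambda>h. (Re h *\<^sub>R dx f z + Im h *\<^sub>R dy f z) - ((g1 z * h) + cnj (g2 z * h)) / 2) = (\<lambda>h. 0)"
    proof
      fix h
      have h: "h = of_real (Re h) + \<i> * of_real (Im h)" by (simp add: complex_eq_iff)
      show "(Re h *\<^sub>R dx f z + Im h *\<^sub>R dy f z) - ((g1 z * h) + cnj (g2 z * h)) / 2 = 0"
        unfolding g1_def g2_def
        apply (subst (3 4) h)
        by (simp add: scaleR_conv_of_real algebra_simps)
    qed
    ultimately show "((\<lambda>z. f z - (H1 z + cnj (H2 z)) / 2) has_derivative (\<lambda>h. 0)) (at z within S)"
      by (simp add: has_derivative_at_withinI)
  qed
  then obtain c where c: "\<And>z. z \<in> S \<Longrightarrow> f z - (H1 z + cnj (H2 z)) / 2 = c" by auto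
  show ?thesis
  proof (rule that)
    show "H1 holomorphic_on S" using H1a by (meson field_differentiable_at_within field_differentiable_def holomorphic_on_def)
    show "H2 holomorphic_on S" using H2a by (meson field_differentiable_at_within field_differentiable_def holomorphic_on_def)
    show "f z = (H1 z + cnj (H2 z)) / 2 + c" if "z \<in> S" for z using c[OF that] by (simp add: algebra_simps)
  qed
qed


lemma harm_maxprin:
  assumes C: "convex S" and w0: "w0 \<in> S" and mx: "\<And>z. z \<in> S \<Longrightarrow> cmod (f z) \<le> cmod (f w0)"
    and z: "z \<in> S"
  shows "f z = f w0"
proof (cases "f w0 = 0")
  case True
  then show ?thesis using mx[OF z] by simp
next
  case False
  define M where "M = cmod (f w0)"
  have M: "M > 0" using False by (simp add: M_def)
  define u where "u = f w0 / of_real M"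
  have u1: "cmod u = 1" using M by (simp add: u_def norm_divide M_def)
  have uu: "cnj u * u = 1" using u1 by (metis complex_norm_square mult.commute of_real_1 power_one)
  have fw0: "f w0 = u * of_real M" using M by (simp add: u_def)
  obtain H1 H2 c where h1: "H1 holomorphic_on S" and h2: "H2 holomorphic_on S"
    and fd: "\<And>z. z \<in> S \<Longrightarrow> f z = (H1 z + cnj (H2 z)) / 2 + c"
    using harm_decomp[OF C] by blast
  define G where "G z = (cnj u * H1 z + u * H2 z) / 2" for z
  have holG: "G holomorphic_on S" unfolding G_def by (intro holomorphic_intros h1 h2) auto
  have ReG: "Re (cnj u * f z) = Re (G z) + Re (cnj u * c)" if "z \<in> S" for z
    using fd[OF that] unfolding G_def by (simp add: algebra_simps)
  have fw0': "cnj u * f w0 = of_real M" using fw0 uu by (simp add: mult.assoc[symmetric])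
  have le: "Re (G z) \<le> Re (G w0)" if "z \<in> S" for z
  proof -
    have "Re (cnj u * f z) \<le> cmod (cnj u * f z)" by (rule complex_Re_le_cmod)
    also have "\<dots> \<le> M" using mx[OF that] u1 by (simp add: norm_mult M_def)
    finally show ?thesis using ReG[OF that] ReG[OF w0] fw0' by simp
  qed
  have "(\<lambda>z. exp (G z)) constant_on S"
  proof (rule maximum_modulus_principle[where U=S and \<xi>=w0])
    show "(\<lambda>z. exp (G z)) holomorphic_on S" by (intro holomorphic_intros holG)
    show "connected S" using C by (rule convex_connected)
    show "cmod (exp (G z)) \<le> cmod (exp (G w0))" if "z \<in> S" for z using le[OF that] by simp
  qed (use S w0 in auto)
  then have "exp (G z) = exp (G w0)" using z w0 by (auto simp: constant_on_def)
  then have "exp (Re (G z)) = exp (Re (G w0))" by (metis norm_exp_eq_Re)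
  then have "Re (G z) = Re (G w0)" by simp
  then have Rz: "Re (cnj u * f z) = M" using ReG[OF z] ReG[OF w0] fw0' by simp
  have Nz: "cmod (cnj u * f z) \<le> M" using mx[OF z] u1 by (simp add: norm_mult M_def)
  have "Im (cnj u * f z) = 0"
  proof -
    have "(cmod (cnj u * f z))^2 = (Re (cnj u * f z))^2 + (Im (cnj u * f z))^2" by (rule cmod_power2)
    moreover have "(cmod (cnj u * f z))^2 \<le> M^2" using Nz by (simp add: power_mono)
    ultimately show ?thesis using Rz by simp
  qed
  then have "cnj u * f z = of_real M" using Rz by (simp add: complex_eq_iff)
  then have "u * (cnj u * f z) = u * of_real M" by simp
  then show ?thesis using uu fw0 by (simp add: mult.assoc[symmetric] mult.commute[of u])
qed

end



lemma su_inv_SU11: "g \<in> SU11 \<Longrightarrow> su_inv g \<in> SU11"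
  by (cases g) (auto simp: SU11_def su_inv_def)

lemma su_inv_inv: "su_inv (su_inv g) = g"
  by (cases g) (auto simp: su_inv_def)

lemma su_inv_mult: "su_inv (su_mult k g) = su_mult (su_inv g) (su_inv k)"
  by (cases k; cases g) (auto simp: su_inv_def su_mult_def algebra_simps)

lemma SU11_ab: "(a, b) \<in> SU11 \<Longrightarrow> cmod b < cmod a"
proof -
  assume "(a, b) \<in> SU11"
  then have "(cmod a)^2 = 1 + (cmod b)^2" by (simp add: SU11_def)
  then have "(cmod b)^2 < (cmod a)^2" by simp
  then show ?thesis using power_less_imp_less_base by fastforce
qed

lemma mob_den: assumes "(a, b) \<in> SU11" "cmod w < 1" shows "cnj b * w + cnj a \<noteq> 0"
proof
  assume "cnj b * w + cnj a = 0"
  then have "cnj a = - (cnj b * w)" by (simp add: eq_neg_iff_add_eq_0 add.commute)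
  then have "cmod a = cmod b * cmod w" by (metis complex_mod_cnj norm_minus_cancel norm_mult)
  also have "\<dots> \<le> cmod b" using assms(2) by (simp add: mult_left_le)
  finally show False using SU11_ab[OF assms(1)] by simp
qed

lemma mob_norm_identity:
  "(cmod (a * w + b))^2 - (cmod (cnj b * w + cnj a))^2 = ((cmod a)^2 - (cmod b)^2) * ((cmod w)^2 - 1)"
  unfolding cmod_power2 by (simp add: algebra_simps power2_eq_square)

lemma mob_ball: assumes "g \<in> SU11" "cmod w < 1" shows "cmod (mob g w) < 1"
proof (cases g)
  case (Pair a b)
  have ab: "(cmod a)^2 - (cmod b)^2 = 1" using assms(1) Pair by (simp add: SU11_def)
  have den: "cnj b * w + cnj a \<noteq> 0" using mob_den assms Pair by blast
  have "(cmod w)^2 < 1" using assms(2) by (simp add: power_less_one_iff abs_less_iff) 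
  then have "(cmod (a * w + b))^2 < (cmod (cnj b * w + cnj a))^2"
    using mob_norm_identity[of a w b] ab by simp
  then have "cmod (a * w + b) < cmod (cnj b * w + cnj a)"
    using power_less_imp_less_base by fastforce
  then show ?thesis using den Pair by (simp add: mob_def norm_divide divide_less_eq)
qed

lemma mob_comp:
  assumes "p \<in> SU11" "q \<in> SU11" "cmod w < 1"
  shows "mob p (mob q w) = mob (su_mult p q) w"
proof (cases p; cases q)
  fix a1 b1 a2 b2 assume p: "p = (a1, b1)" and q: "q = (a2, b2)"
  have d2: "cnj b2 * w + cnj a2 \<noteq> 0" using mob_den assms q by blast
  have m: "cmod (mob q w) < 1" using mob_ball assms by blast
  have d1: "cnj b1 * mob q w + cnj a1 \<noteq> 0" using mob_den[OF _ m] assms p by blast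
  have d1': "cnj b1 * (a2 * w + b2) + cnj a1 * (cnj b2 * w + cnj a2) \<noteq> 0"
    using d1 d2 q by (simp add: mob_def field_simps)
  have gen: "(x * (N / D) + y) / (u * (N / D) + v) = (x * N + y * D) / (u * N + v * D)"
    if "D \<noteq> 0" for x y u v N D :: complex
    using that by (simp add: divide_simps)
  have "mob p (mob q w) = (a1 * (a2 * w + b2) + b1 * (cnj b2 * w + cnj a2)) /
       (cnj b1 * (a2 * w + b2) + cnj a1 * (cnj b2 * w + cnj a2))"
    using gen[OF d2] p q by (simp add: mob_def)
  also have "\<dots> = mob (su_mult p q) w"
    using p q by (simp add: mob_def su_mult_def algebra_simps)
  finally show ?thesis .
qed

lemma mob_onto: assumes "cmod z < 1" shows "\<exists>g\<in>SU11. mob g 0 = z"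
proof -
  define r where "r = 1 / sqrt (1 - (cmod z)^2)"
  have pos: "1 - (cmod z)^2 > 0" using assms by (simp add: power_less_one_iff abs_less_iff)
  have r: "r > 0" using pos by (simp add: r_def)
  have r2: "r^2 * (1 - (cmod z)^2) = 1" using pos by (simp add: r_def power_divide)
  have "(of_real r, z * of_real r) \<in> SU11"
    using r2 r by (simp add: SU11_def norm_mult power_mult_distrib algebra_simps)
  moreover have "mob (of_real r, z * of_real r) 0 = z" using r by (simp add: mob_def)
  ultimately show ?thesis by blast
qed

lemma mob_inv0: "mob (su_inv k) 0 = - snd k / fst k"
  by (cases k) (simp add: mob_def su_inv_def)



definition lu_pred :: "(complex \<Rightarrow> complex) set \<Rightarrow> bool" where
  "lu_pred U \<longleftrightarrow> (\<forall>\<phi>\<in>U. \<exists>K e. compact K \<and> K \<subseteq> ball 0 1 \<and> e > 0 \<and>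
       {\<psi>. \<forall>z\<in>K. cmod (\<psi> z - \<phi> z) < e} \<subseteq> U)"

lemma lu_pred_Int:
  fixes S T :: "(complex \<Rightarrow> complex) set"
  assumes S: "\<forall>\<phi>\<in>S. \<exists>K e. compact K \<and> K \<subseteq> ball 0 1 \<and> e > 0 \<and> {\<psi>. \<forall>z\<in>K. cmod (\<psi> z - \<phi> z) < e} \<subseteq> S"
    and T: "\<forall>\<phi>\<in>T. \<exists>K e. compact K \<and> K \<subseteq> ball 0 1 \<and> e > 0 \<and> {\<psi>. \<forall>z\<in>K. cmod (\<psi> z - \<phi> z) < e} \<subseteq> T"
  shows "\<forall>\<phi>\<in>S \<inter> T. \<exists>K e. compact K \<and> K \<subseteq> ball 0 1 \<and> e > 0 \<and> {\<psi>. \<forall>z\<in>K. cmod (\<psi> z - \<phi> z) < e} \<subseteq> S \<inter> T"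
proof
  fix \<phi> assume ST: "\<phi> \<in> S \<inter> T"
  obtain K1 e1 where 1: "compact K1" "K1 \<subseteq> ball 0 1" "e1 > 0" "{\<psi>. \<forall>z\<in>K1. cmod (\<psi> z - \<phi> z) < e1} \<subseteq> S"
    using bspec[OF S, of \<phi>] ST by blast
  obtain K2 e2 where 2: "compact K2" "K2 \<subseteq> ball 0 1" "e2 > 0" "{\<psi>. \<forall>z\<in>K2. cmod (\<psi> z - \<phi> z) < e2} \<subseteq> T"
    using bspec[OF T, of \<phi>] ST by blast
  show "\<exists>K e. compact K \<and> K \<subseteq> ball 0 1 \<and> e > 0 \<and> {\<psi>. \<forall>z\<in>K. cmod (\<psi> z - \<phi> z) < e} \<subseteq> S \<inter> T"
  proof (intro exI[of _ "K1 \<union> K2"] exI[of _ "min e1 e2"] conjI)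
    show "compact (K1 \<union> K2)" using 1 2 by (simp add: compact_Un)
    show "K1 \<union> K2 \<subseteq> ball 0 1" using 1 2 by simp
    show "min e1 e2 > 0" using 1 2 by simp
    show "{\<psi>. \<forall>z\<in>K1 \<union> K2. cmod (\<psi> z - \<phi> z) < min e1 e2} \<subseteq> S \<inter> T"
    proof
      fix \<psi> assume "\<psi> \<in> {\<psi>. \<forall>z\<in>K1 \<union> K2. cmod (\<psi> z - \<phi> z) < min e1 e2}"
      then have "\<psi> \<in> {\<psi>. \<forall>z\<in>K1. cmod (\<psi> z - \<phi> z) < e1}" "\<psi> \<in> {\<psi>. \<forall>z\<in>K2. cmod (\<psi> z - \<phi> z) < e2}"
        by auto
      then show "\<psi> \<in> S \<inter> T" using 1(4) 2(4) by blast
    qed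
  qed
qed

lemma lu_pred_Union:
  fixes \<K> :: "(complex \<Rightarrow> complex) set set"
  assumes A: "\<forall>S\<in>\<K>. \<forall>\<phi>\<in>S. \<exists>K e. compact K \<and> K \<subseteq> ball 0 1 \<and> e > 0 \<and> {\<psi>. \<forall>z\<in>K. cmod (\<psi> z - \<phi> z) < e} \<subseteq> S"
  shows "\<forall>\<phi>\<in>\<Union>\<K>. \<exists>K e. compact K \<and> K \<subseteq> ball 0 1 \<and> e > 0 \<and> {\<psi>. \<forall>z\<in>K. cmod (\<psi> z - \<phi> z) < e} \<subseteq> \<Union>\<K>"
proof
  fix \<phi> assume "\<phi> \<in> \<Union>\<K>"
  then obtain S where S: "S \<in> \<K>" "\<phi> \<in> S" by blast
  obtain K e where "compact K" "K \<subseteq> ball 0 1" "e > 0" "{\<psi>. \<forall>z\<in>K. cmod (\<psi> z - \<phi> z) < e} \<subseteq> S"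
    using bspec[OF bspec[OF A S(1)] S(2)] by blast
  then show "\<exists>K e. compact K \<and> K \<subseteq> ball 0 1 \<and> e > 0 \<and> {\<psi>. \<forall>z\<in>K. cmod (\<psi> z - \<phi> z) < e} \<subseteq> \<Union>\<K>"
    using S(1) by blast
qed

lemma lu_istop: "istopology (\<lambda>U::(complex \<Rightarrow> complex) set. \<forall>\<phi>\<in>U. \<exists>K e. compact K \<and> K \<subseteq> ball 0 1 \<and> e > 0 \<and>
       {\<psi>. \<forall>z\<in>K. cmod (\<psi> z - \<phi> z) < e} \<subseteq> U)"
  unfolding istopology_def
  apply (intro conjI allI impI)
   apply (rule lu_pred_Int; assumption)
  apply (rule lu_pred_Union; assumption)
  done

lemma lu_openin: "openin lu_topology U \<longleftrightarrow> (\<forall>\<phi>\<in>U. \<exists>K e. compact K \<and> K \<subseteq> ball 0 1 \<and> e > 0 \<and>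
       {\<psi>. \<forall>z\<in>K. cmod (\<psi> z - \<phi> z) < e} \<subseteq> U)"
  unfolding lu_topology_def using lu_istop by simp

lemma lu_open_ball:
  assumes D: "compact D" "D \<subseteq> ball 0 1"
  shows "openin lu_topology {\<psi>. \<exists>e'. e' < r \<and> (\<forall>w\<in>D. cmod (\<psi> w - \<phi> w) \<le> e')}"
  unfolding lu_openin
proof
  fix \<psi> assume "\<psi> \<in> {\<psi>. \<exists>e'. e' < r \<and> (\<forall>w\<in>D. cmod (\<psi> w - \<phi> w) \<le> e')}"
  then obtain e' where e': "e' < r" "\<And>w. w \<in> D \<Longrightarrow> cmod (\<psi> w - \<phi> w) \<le> e'" by blast
  show "\<exists>K e. compact K \<and> K \<subseteq> ball 0 1 \<and> e > 0 \<and> {\<rho>. \<forall>z\<in>K. cmod (\<rho> z - \<psi> z) < e} \<subseteq> {\<psi>. \<exists>e'. e' < r \<and> (\<forall>w\<in>D. cmod (\<psi> w - \<phi> w) \<le> e')}"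
  proof (intro exI[of _ D] exI[of _ "(r - e') / 2"] conjI D subsetI)
    show "(r - e') / 2 > 0" using e' by simp
    fix \<rho> assume "\<rho> \<in> {\<rho>. \<forall>z\<in>D. cmod (\<rho> z - \<psi> z) < (r - e') / 2}"
    then have c: "\<And>z. z \<in> D \<Longrightarrow> cmod (\<rho> z - \<psi> z) < (r - e') / 2" by blast
    have "cmod (\<rho> w - \<phi> w) \<le> e' + (r - e') / 2" if "w \<in> D" for w
    proof -
      have "cmod (\<rho> w - \<phi> w) \<le> cmod (\<rho> w - \<psi> w) + cmod (\<psi> w - \<phi> w)"
        using norm_triangle_ineq[of "\<rho> w - \<psi> w" "\<psi> w - \<phi> w"] by simp
      then show ?thesis using c[OF that] e'(2)[OF that] by linarith
    qed
    moreover have "e' + (r - e') / 2 < r" using e'(1) by (simp add: field_simps)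
    ultimately show "\<rho> \<in> {\<psi>. \<exists>e'. e' < r \<and> (\<forall>w\<in>D. cmod (\<psi> w - \<phi> w) \<le> e')}" by blast
  qed
qed



theorem mainTheorem10:
  fixes \<Gamma> :: "(complex \<times> complex) set"
  assumes "cocompact_lattice \<Gamma>"
  shows "\<not> (\<exists>V. V \<noteq> {} \<and> V \<subseteq> Har_star \<and> compactin lu_topology V \<and>
              (\<forall>\<phi>\<in>V. \<forall>\<gamma>\<in>\<Gamma>. \<phi> \<circ> mob (su_inv \<gamma>) \<in> V))"
proof
  assume "\<exists>V. V \<noteq> {} \<and> V \<subseteq> Har_star \<and> compactin lu_topology V \<and>
              (\<forall>\<phi>\<in>V. \<forall>\<gamma>\<in>\<Gamma>. \<phi> \<circ> mob (su_inv \<gamma>) \<in> V)"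
  then obtain V where V0: "V \<noteq> {}" and VH: "V \<subseteq> Har_star" and Vc: "compactin lu_topology V"
    and Vinv: "\<And>\<phi> \<gamma>. \<phi> \<in> V \<Longrightarrow> \<gamma> \<in> \<Gamma> \<Longrightarrow> \<phi> \<circ> mob (su_inv \<gamma>) \<in> V" by blast
  from assms obtain K where GS: "\<Gamma> \<subseteq> SU11" and Kc: "compact K" and KS: "K \<subseteq> SU11"
    and KG: "\<And>g. g \<in> SU11 \<Longrightarrow> \<exists>k\<in>K. \<exists>\<gamma>\<in>\<Gamma>. g = su_mult k \<gamma>"
    unfolding cocompact_lattice_def by blast
  define B where "B = ball (0::complex) 1"
  have oB: "open B" and cB: "convex B" by (simp_all add: B_def)
  define D where "D = (\<lambda>k. mob (su_inv k) 0) ` K"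
  have DB: "D \<subseteq> B" unfolding D_def B_def
    using mob_ball[OF su_inv_SU11, of _ 0] KS by auto
  have "D = (\<lambda>k. - snd k / fst k) ` K" unfolding D_def by (simp add: mob_inv0)
  moreover have "continuous_on K (\<lambda>k. - snd k / fst k)"
  proof -
    have nz: "fst k \<noteq> 0" if "k \<in> K" for k
    proof -
      have "k \<in> SU11" using KS that by blast
      then show "fst k \<noteq> 0" using SU11_ab[of "fst k" "snd k"] by auto
    qed
    show ?thesis by (intro continuous_intros) (use nz in auto)
  qed
  ultimately have Dc: "compact D" using Kc compact_continuous_image by metis
  have "(1, 0) \<in> SU11" by (simp add: SU11_def)
  then have Dne: "D \<noteq> {}" using KG unfolding D_def by blast
  have harmV: "harmonic_on \<psi> B" if "\<psi> \<in> V" for \<psi>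
    using VH that by (auto simp: Har_star_def Har_def B_def)
  have contV: "continuous_on B \<psi>" if "\<psi> \<in> V" for \<psi>
    using harm_cont[OF harmV[OF that] oB] .
  have bnd: "cmod (\<psi> w) \<le> 1" if "\<psi> \<in> V" "w \<in> B" for \<psi> w
  proof -
    have "\<psi> ` ball 0 1 \<subseteq> cball 0 1" using VH that(1) by (auto simp: Har_star_def Har_def)
    moreover have "\<psi> w \<in> \<psi> ` ball 0 1" using that(2) unfolding B_def by blast
    ultimately have "\<psi> w \<in> cball 0 1" by blast
    then show ?thesis by (simp add: dist_norm)
  qed
  define F where "F \<psi> = Sup ((\<lambda>w. cmod (\<psi> w)) ` D)" for \<psi> :: "complex \<Rightarrow> complex"
  have bddF: "bdd_above ((\<lambda>w. cmod (\<psi> w)) ` D)" if "\<psi> \<in> V" for \<psi>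
    using bnd[OF that] DB by (auto intro!: bdd_aboveI[of _ 1])
  have Fatt: "\<exists>w\<in>D. F \<psi> = cmod (\<psi> w)" if "\<psi> \<in> V" for \<psi>
  proof -
    have "continuous_on D (\<lambda>w. cmod (\<psi> w))"
      using continuous_on_subset[OF contV[OF that] DB] by (intro continuous_intros)
    then have "compact ((\<lambda>w. cmod (\<psi> w)) ` D)" using Dc by (rule compact_continuous_image)
    then obtain x where x: "x \<in> (\<lambda>w. cmod (\<psi> w)) ` D" "\<And>y. y \<in> (\<lambda>w. cmod (\<psi> w)) ` D \<Longrightarrow> y \<le> x"
      using compact_attains_sup Dne by (metis image_is_empty)
    then have "F \<psi> = x" unfolding F_def by (intro cSup_eq_maximum) auto
    then show ?thesis using x(1) by auto
  qed
  have Fup: "cmod (\<psi> w) \<le> F \<psi>" if "\<psi> \<in> V" "w \<in> D" for \<psi> w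
    unfolding F_def using bddF[OF that(1)] that(2) by (intro cSup_upper) auto
  have Fle1: "F \<psi> \<le> 1" if "\<psi> \<in> V" for \<psi>
    using Fatt[OF that] bnd[OF that] DB by auto
  define S0 where "S0 = Sup (F ` V)"
  have bddS: "bdd_above (F ` V)" using Fle1 by (auto intro!: bdd_aboveI[of _ 1])
  have FS0: "F \<psi> \<le> S0" if "\<psi> \<in> V" for \<psi>
    unfolding S0_def using bddS that by (intro cSup_upper) auto
  have att: "\<exists>\<psi>0\<in>V. F \<psi>0 = S0"
  proof (rule ccontr)
    assume na: "\<not> (\<exists>\<psi>0\<in>V. F \<psi>0 = S0)"
    then have lt: "F \<phi> < S0" if "\<phi> \<in> V" for \<phi> using FS0[OF that] that by force
    define Nb where "Nb \<phi> = {\<psi>. \<exists>e'. e' < (S0 - F \<phi>) / 2 \<and> (\<forall>w\<in>D. cmod (\<psi> w - \<phi> w) \<le> e')}" for \<phi>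
    have opn: "\<forall>U \<in> Nb ` V. openin lu_topology U"
      unfolding Nb_def using lu_open_ball[OF Dc] DB unfolding B_def by blast
    have cov: "V \<subseteq> \<Union> (Nb ` V)"
    proof
      fix \<phi> assume "\<phi> \<in> V"
      then have "\<phi> \<in> Nb \<phi>" using lt[of \<phi>] unfolding Nb_def by (intro CollectI exI[of _ 0]) auto
      then show "\<phi> \<in> \<Union> (Nb ` V)" using \<open>\<phi> \<in> V\<close> by blast
    qed
    obtain \<F> where "finite \<F>" "\<F> \<subseteq> Nb ` V" "V \<subseteq> \<Union>\<F>"
      using Vc opn cov unfolding compactin_def by meson
    then obtain P where P: "P \<subseteq> V" "finite P" "V \<subseteq> \<Union> (Nb ` P)"
      by (metis finite_subset_image)
    have Pne: "P \<noteq> {}" using P(3) V0 by auto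
    define m where "m = Max (F ` P)"
    have m_in: "m \<in> F ` P" unfolding m_def using P(2) Pne by simp
    then have m_lt: "m < S0" using lt P(1) by auto
    have Fm: "F \<phi> \<le> m" if "\<phi> \<in> P" for \<phi> unfolding m_def using P(2) that by simp
    have "F \<psi> \<le> (S0 + m) / 2" if \<psi>: "\<psi> \<in> V" for \<psi>
    proof -
      obtain \<phi> where \<phi>: "\<phi> \<in> P" "\<psi> \<in> Nb \<phi>" using P(3) \<psi> by blast
      then obtain e' where e': "e' < (S0 - F \<phi>) / 2" "\<And>w. w \<in> D \<Longrightarrow> cmod (\<psi> w - \<phi> w) \<le> e'"
        unfolding Nb_def by blast
      obtain w where w: "w \<in> D" "F \<psi> = cmod (\<psi> w)" using Fatt[OF \<psi>] by blast
      have "cmod (\<psi> w) \<le> cmod (\<phi> w) + cmod (\<psi> w - \<phi> w)"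
        using norm_triangle_ineq[of "\<phi> w" "\<psi> w - \<phi> w"] by simp
      also have "\<dots> \<le> F \<phi> + e'" using Fup[of \<phi> w] \<phi>(1) P(1) w(1) e'(2)[OF w(1)] by force
      finally have a: "F \<psi> \<le> F \<phi> + e'" using w(2) by simp
      have b: "F \<phi> + e' < (S0 + F \<phi>) / 2" using e'(1) by (simp add: field_simps)
      have c: "(S0 + F \<phi>) / 2 \<le> (S0 + m) / 2" using Fm[OF \<phi>(1)] by (simp add: field_simps)
      show ?thesis using a b c by simp
    qed
    then have "S0 \<le> (S0 + m) / 2" unfolding S0_def using V0 by (intro cSup_least) auto
    then show False using m_lt by (simp add: field_simps)
  qed
  then obtain \<psi>0 where \<psi>0: "\<psi>0 \<in> V" "F \<psi>0 = S0" by blast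
  obtain w0 where w0: "w0 \<in> D" "F \<psi>0 = cmod (\<psi>0 w0)" using Fatt[OF \<psi>0(1)] by blast
  have maxz: "cmod (\<psi>0 z) \<le> cmod (\<psi>0 w0)" if z: "z \<in> B" for z
  proof -
    have "cmod z < 1" using z by (simp add: B_def)
    from mob_onto[OF this] obtain g where g: "g \<in> SU11" "mob g 0 = z" by blast
    obtain k \<gamma> where k: "k \<in> K" "\<gamma> \<in> \<Gamma>" "su_inv g = su_mult k \<gamma>"
      using KG[OF su_inv_SU11[OF g(1)]] by blast
    have "g = su_mult (su_inv \<gamma>) (su_inv k)" using k(3) by (metis su_inv_inv su_inv_mult)
    then have "z = mob (su_inv \<gamma>) (mob (su_inv k) 0)"
    proof -
      have "\<gamma> \<in> SU11" "k \<in> SU11" using k GS KS by auto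
      then have "mob (su_inv \<gamma>) (mob (su_inv k) 0) = mob (su_mult (su_inv \<gamma>) (su_inv k)) 0"
        using mob_comp[OF su_inv_SU11 su_inv_SU11, of \<gamma> k 0] by simp
      then show ?thesis using g(2) \<open>g = _\<close> by simp
    qed
    then have "\<psi>0 z = (\<psi>0 \<circ> mob (su_inv \<gamma>)) (mob (su_inv k) 0)" by simp
    moreover have "mob (su_inv k) 0 \<in> D" using k(1) unfolding D_def by blast
    moreover have "\<psi>0 \<circ> mob (su_inv \<gamma>) \<in> V" using Vinv[OF \<psi>0(1) k(2)] .
    ultimately have "cmod (\<psi>0 z) \<le> F (\<psi>0 \<circ> mob (su_inv \<gamma>))" using Fup by metis
    also have "\<dots> \<le> S0" using FS0[OF \<open>\<psi>0 \<circ> mob (su_inv \<gamma>) \<in> V\<close>] .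
    finally show ?thesis using \<psi>0(2) w0(2) by simp
  qed
  have "\<psi>0 z = \<psi>0 w0" if "z \<in> B" for z
    using harm_maxprin[OF harmV[OF \<psi>0(1)] oB cB _ maxz that] w0(1) DB by blast
  moreover have "\<psi>0 \<in> Har_star" using VH \<psi>0(1) by blast
  ultimately show False unfolding Har_star_def B_def by blast
qed


end
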